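(* In the currency market model #2 described in the context, fix $t\in\mathbb T$ and assume that for every $B\in\mathcal H_t$ with $\mathbb P(B)>0$ there exists $B'\in\mathcal F$, $B'\subset B$, with $\mathbb P(B')>0$ such that on $B'$, for all $i,j,k\le d$, $1+\lambda^{ij}_t\le(1+\lambda^{ik}_t)(1+\lambda^{kj}_t)$ and $\lambda^{ij}_t+\lambda^{ji}_t>0$. Then $N^0_t(F)=\{0\}$.
   Context: Let $T\in\mathbb N$, $\mathbb T=\{0,\dots,T\}$, $d\ge1$, $(\Omega,\mathcal F,\mathbb P)$ a complete probability space and $\mathbb H=(\mathcal H_t)_{t\in\mathbb T}$ a filtration with $\mathcal H_T\subset\mathcal F$. $\mathbb M^d$ denotes real $d\times d$ matrices, $\mathbb M^d_+$ those with nonnegative entries; $L^0(E;\mathcal G)$ denotes $E$-valued $\mathcal G$-measurable random variables; equalities between random variables hold a.s. Let $S=(S_t)_{t\in\mathbb T}$ be an $\mathcal F$-measurable $(0,\infty)^d$-valued process and $\lambda=(\lambda_t)_{t\in\mathbb T}$ an $\mathcal F$-measurable $\mathbb M^d_+$-valued process (neither necessarily $\mathbb H$-adapted); set $\tau^{ij}_t=S^j_t/S^i_t$. For $\rho,\ell\in\mathbb M^d_+$ define $f(\cdot;\rho,\ell):\mathbb M^d\to\mathbb R^d$ by $f^i(a;\rho,\ell)=\sum_{j=1}^d a^{ji}\mathbf 1_{\{a^{ji}>0\}}-a^{ij}\rho^{ij}(1+\ell^{ij})\mathbf 1_{\{a^{ij}>0\}}$, $i\le d$. Set $\mathcal A=\mathbb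 M^d_+$ and $F_t(a)=f(a;\tau_t,\lambda_t)$, $t\in\mathbb T$. Let $N_t(F)=\{F_t(\eta):\eta\in L^0(\mathbb M^d_+;\mathcal H_t)\}$ and $N^0_t(F)=N_t(F)\cap(-N_t(F))$. *)

theory Defs
  imports "HOL-Probability.Probability"
begin

text \<open>Currency market model #2. Matrices in M^d are real^'d^'d, entry (i,j) is a $ i $ j.\<close>

definition fmap :: "real^'d^'d \<Rightarrow> real^'d^'d \<Rightarrow> real^'d^'d \<Rightarrow> real^'d" where
  "fmap \<rho> l a = (\<chi> i. \<Sum>j\<in>UNIV.
      (if a $ j $ i > 0 then a $ j $ i else 0)
    - (if a $ i $ j > 0 then a $ i $ j * \<rho> $ i $ j * (1 + l $ i $ j) else 0))"

definition tau :: "real^'d \<Rightarrow> real^'d^'d" where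
  "tau s = (\<chi> i j. s $ j / s $ i)"

definition Fmap :: "(nat \<Rightarrow> 'a \<Rightarrow> real^'d) \<Rightarrow> (nat \<Rightarrow> 'a \<Rightarrow> real^'d^'d) \<Rightarrow> nat \<Rightarrow> 'a \<Rightarrow> real^'d^'d \<Rightarrow> real^'d" where
  "Fmap S lam t \<omega> a = fmap (tau (S t \<omega>)) (lam t \<omega>) a"

text \<open>N_t(F): random vectors equal a.s. to F_t(eta) for some H_t-measurable M^d_+-valued eta.
  Random variables are identified up to a.s. equality, so N_t(F) is saturated under a.s. equality.\<close>
definition Nset :: "'a measure \<Rightarrow> (nat \<Rightarrow> 'a measure) \<Rightarrow> (nat \<Rightarrow> 'a \<Rightarrow> real^'d) \<Rightarrow> (nat \<Rightarrow> 'a \<Rightarrow> real^'d^'d) \<Rightarrow> nat \<Rightarrow> ('a \<Rightarrow> real^'d) set" where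
  "Nset M H S lam t = {X \<in> borel_measurable M. \<exists>\<eta> \<in> borel_measurable (H t).
      (\<forall>\<omega>\<in>space M. \<forall>i j. \<eta> \<omega> $ i $ j \<ge> 0) \<and>
      (AE \<omega> in M. X \<omega> = Fmap S lam t \<omega> (\<eta> \<omega>))}"

definition N0set :: "'a measure \<Rightarrow> (nat \<Rightarrow> 'a measure) \<Rightarrow> (nat \<Rightarrow> 'a \<Rightarrow> real^'d) \<Rightarrow> (nat \<Rightarrow> 'a \<Rightarrow> real^'d^'d) \<Rightarrow> nat \<Rightarrow> ('a \<Rightarrow> real^'d) set" where
  "N0set M H S lam t = {X. X \<in> Nset M H S lam t \<and> (\<lambda>\<omega>. - X \<omega>) \<in> Nset M H S lam t}"

definition zero_class :: "'a measure \<Rightarrow> ('a \<Rightarrow> real^'d) set" where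
  "zero_class M = {X \<in> borel_measurable M. AE \<omega> in M. X \<omega> = 0}"

end

theory Submission
  imports Defs
begin

lemma fmap_nonneg_eq:
  assumes "\<forall>i j. a $ i $ j \<ge> 0"
  shows "fmap r l a $ i = (\<Sum>j\<in>UNIV. a $ j $ i - a $ i $ j * r $ i $ j * (1 + l $ i $ j))"
proof -
  have "\<And>j. (if a $ j $ i > 0 then a $ j $ i else 0) = a $ j $ i"
    using assms by (metis antisym_conv2)
  moreover have "\<And>j. (if a $ i $ j > 0 then a $ i $ j * r $ i $ j * (1 + l $ i $ j) else 0) = a $ i $ j * r $ i $ j * (1 + l $ i $ j)"
    using assms by (metis antisym_conv2 mult_zero_left)
  ultimately show ?thesis unfolding fmap_def by simp
qed

lemma fmap_add:
  assumes "\<forall>i j. a $ i $ j \<ge> 0" "\<forall>i j. b $ i $ j \<ge> 0"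
  shows "fmap r l a + fmap r l b = fmap r l (a + b)"
proof -
  have c: "\<forall>i j. (a+b) $ i $ j \<ge> 0" using assms by simp
  show ?thesis
    by (simp add: vec_eq_iff fmap_nonneg_eq[OF assms(1)] fmap_nonneg_eq[OF assms(2)]
        fmap_nonneg_eq[OF c] sum.distrib[symmetric] algebra_simps sum_subtractf[symmetric])
qed

lemma fmap_zero: "fmap r l 0 = 0"
  by (simp add: fmap_def vec_eq_iff)

lemma weighted:
  fixes s :: "real^'d" and a l :: "real^'d^'d" and w :: "'d \<Rightarrow> real"
  assumes "\<forall>i. s $ i > 0" "\<forall>i j. a $ i $ j \<ge> 0"
  shows "(\<Sum>i\<in>UNIV. w i * s $ i * fmap (tau s) l a $ i)
     = (\<Sum>i\<in>UNIV. \<Sum>j\<in>UNIV. a $ i $ j * s $ j * (w j - w i * (1 + l $ i $ j)))"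
proof -
  have "(\<Sum>i\<in>UNIV. w i * s $ i * fmap (tau s) l a $ i)
     = (\<Sum>i\<in>UNIV. \<Sum>j\<in>UNIV. w i * s $ i * a $ j $ i - w i * a $ i $ j * s $ j * (1 + l $ i $ j))"
  proof (rule sum.cong[OF refl])
    fix i
    have si: "s $ i \<noteq> 0" using assms(1) by (metis less_irrefl)
    show "w i * s $ i * fmap (tau s) l a $ i = (\<Sum>j\<in>UNIV. w i * s $ i * a $ j $ i - w i * a $ i $ j * s $ j * (1 + l $ i $ j))"
      unfolding fmap_nonneg_eq[OF assms(2)] sum_distrib_left
      by (rule sum.cong[OF refl]) (simp add: tau_def field_simps si)
  qed
  also have "\<dots> = (\<Sum>i\<in>UNIV. \<Sum>j\<in>UNIV. w i * s $ i * a $ j $ i) - (\<Sum>i\<in>UNIV. \<Sum>j\<in>UNIV. w i * a $ i $ j * s $ j * (1 + l $ i $ j))"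
    by (simp add: sum_subtractf)
  also have "(\<Sum>i\<in>UNIV. \<Sum>j\<in>UNIV. w i * s $ i * a $ j $ i) = (\<Sum>i\<in>UNIV. \<Sum>j\<in>UNIV. w j * s $ j * a $ i $ j)"
    by (rule sum.swap)
  also have "(\<Sum>i\<in>UNIV. \<Sum>j\<in>UNIV. w j * s $ j * a $ i $ j) - (\<Sum>i\<in>UNIV. \<Sum>j\<in>UNIV. w i * a $ i $ j * s $ j * (1 + l $ i $ j))
     = (\<Sum>i\<in>UNIV. \<Sum>j\<in>UNIV. a $ i $ j * s $ j * (w j - w i * (1 + l $ i $ j)))"
    by (simp add: sum_subtractf[symmetric] algebra_simps)
  finally show ?thesis .
qed

lemma sum_nonneg_zero:
  fixes g :: "'d::finite \<Rightarrow> 'e::finite \<Rightarrow> real"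
  assumes "\<forall>i j. g i j \<ge> 0" "(\<Sum>i\<in>UNIV. \<Sum>j\<in>UNIV. g i j) = 0"
  shows "g i j = 0"
proof -
  have "\<forall>i\<in>UNIV. (\<Sum>j\<in>UNIV. g i j) = 0"
    using assms by (subst sum_nonneg_eq_0_iff[symmetric]) (auto intro: sum_nonneg)
  then have "(\<Sum>j\<in>UNIV. g i j) = 0" by simp
  then show ?thesis using assms(1) by (subst (asm) sum_nonneg_eq_0_iff) auto
qed

lemma key:
  fixes s :: "real^'d" and a l :: "real^'d^'d"
  assumes spos: "\<forall>i. s $ i > 0" and lnn: "\<forall>i j. l $ i $ j \<ge> 0" and ann: "\<forall>i j. a $ i $ j \<ge> 0"
    and tri: "\<forall>i j k. 1 + l $ i $ j \<le> (1 + l $ i $ k) * (1 + l $ k $ j) \<and> l $ i $ j + l $ j $ i > 0"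
    and z: "fmap (tau s) l a = 0"
  shows "a = 0"
proof -
  have "(\<Sum>i\<in>UNIV. (\<lambda>_. 1) i * s $ i * fmap (tau s) l a $ i) = 0" using z by simp
  then have "(\<Sum>i\<in>UNIV. \<Sum>j\<in>UNIV. a $ i $ j * s $ j * (1 - 1 * (1 + l $ i $ j))) = 0"
    using weighted[OF spos ann, of "\<lambda>_. 1" l] by simp
  then have "(\<Sum>i\<in>UNIV. \<Sum>j\<in>UNIV. a $ i $ j * s $ j * l $ i $ j) = 0"
    by (simp add: sum_negf)
  then have al: "\<And>i j. a $ i $ j * s $ j * l $ i $ j = 0"
    by (rule sum_nonneg_zero[rotated]) (simp add: ann lnn spos less_imp_le)
  have al2: "\<And>i j. a $ i $ j > 0 \<Longrightarrow> l $ i $ j = 0"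
    using al spos by (metis mult_eq_0_iff less_irrefl)
  define \<phi> where "\<phi> i = real (card {k. l $ k $ i = 0})" for i
  have trans: "l $ i $ k = 0" if "l $ i $ j = 0" "l $ j $ k = 0" for i j k
  proof -
    have "1 + l $ i $ k \<le> (1 + l $ i $ j) * (1 + l $ j $ k)" using tri by blast
    then show ?thesis using that lnn by (metis add.right_neutral antisym mult_1 add_le_same_cancel1)
  qed
  have irr: "l $ i $ i \<noteq> 0" for i proof - have "l $ i $ i + l $ i $ i > 0" using tri by blast then show ?thesis by linarith qed
  have phi: "\<phi> i < \<phi> j" if "l $ i $ j = 0" for i j
  proof -
    have "{k. l $ k $ i = 0} \<subset> {k. l $ k $ j = 0}"
      using trans[OF _ that] irr that by blast
    then show ?thesis unfolding \<phi>_def by (simp add: psubset_card_mono)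
  qed
  have "(\<Sum>i\<in>UNIV. \<phi> i * s $ i * fmap (tau s) l a $ i) = 0" using z by simp
  then have "(\<Sum>i\<in>UNIV. \<Sum>j\<in>UNIV. a $ i $ j * s $ j * (\<phi> j - \<phi> i * (1 + l $ i $ j))) = 0"
    using weighted[OF spos ann, of \<phi> l] by simp
  moreover have "a $ i $ j * s $ j * (\<phi> j - \<phi> i * (1 + l $ i $ j)) = a $ i $ j * s $ j * (\<phi> j - \<phi> i)" for i j
    using al2[of i j] ann by (cases "a $ i $ j > 0") (auto simp: antisym_conv2)
  ultimately have sz: "(\<Sum>i\<in>UNIV. \<Sum>j\<in>UNIV. a $ i $ j * s $ j * (\<phi> j - \<phi> i)) = 0" by simp
  have pos: "a $ i $ j * s $ j * (\<phi> j - \<phi> i) > 0" if "a $ i $ j > 0" for i j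
    using phi[OF al2[OF that]] that spos by simp
  have nn: "\<forall>i j. a $ i $ j * s $ j * (\<phi> j - \<phi> i) \<ge> 0"
    using pos ann by (metis antisym_conv2 less_imp_le mult_zero_left order_refl)
  show ?thesis
  proof (rule ccontr)
    assume "a \<noteq> 0"
    then obtain i j where "a $ i $ j \<noteq> 0" by (metis vec_eq_iff zero_index)
    then have "a $ i $ j > 0" using ann by (metis antisym_conv2)
    with pos[of i j] sum_nonneg_zero[OF nn sz, of i j] show False by linarith
  qed
qed

theorem mainTheorem10:
  fixes M :: "'a measure" and H :: "nat \<Rightarrow> 'a measure" and T t :: nat
    and S :: "nat \<Rightarrow> 'a \<Rightarrow> real^'d" and lam :: "nat \<Rightarrow> 'a \<Rightarrow> real^'d^'d"
  assumes prob: "prob_space M"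
    and complete: "complete_measure M"
    and filt_sub: "\<And>s. s \<le> T \<Longrightarrow> subalgebra M (H s)"
    and filt_mono: "\<And>r s. r \<le> s \<Longrightarrow> s \<le> T \<Longrightarrow> sets (H r) \<subseteq> sets (H s)"
    and S_meas: "\<And>s. s \<le> T \<Longrightarrow> S s \<in> borel_measurable M"
    and S_pos: "\<And>s \<omega> i. s \<le> T \<Longrightarrow> \<omega> \<in> space M \<Longrightarrow> S s \<omega> $ i > 0"
    and lam_meas: "\<And>s. s \<le> T \<Longrightarrow> lam s \<in> borel_measurable M"
    and lam_nonneg: "\<And>s \<omega> i j. s \<le> T \<Longrightarrow> \<omega> \<in> space M \<Longrightarrow> lam s \<omega> $ i $ j \<ge> 0"
    and tT: "t \<le> T"
    and hyp: "\<forall>B \<in> sets (H t). measure M B > 0 \<longrightarrow>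
       (\<exists>B' \<in> sets M. B' \<subseteq> B \<and> measure M B' > 0 \<and>
          (\<forall>\<omega>\<in>B'. \<forall>i j k.
             1 + lam t \<omega> $ i $ j \<le> (1 + lam t \<omega> $ i $ k) * (1 + lam t \<omega> $ k $ j) \<and>
             lam t \<omega> $ i $ j + lam t \<omega> $ j $ i > 0))"
  shows "N0set M H S lam t = zero_class M"
  proof -
  interpret P: prob_space M by (rule prob)
  have sub: "subalgebra M (H t)" using filt_sub tT by blast
  have spc: "space (H t) = space M" and ssub: "sets (H t) \<subseteq> sets M"
    using sub unfolding subalgebra_def by auto
  show ?thesis
  proof (intro set_eqI iffI)
    fix X :: "'a \<Rightarrow> real^'d"
    assume "X \<in> zero_class M"
    then have Xm: "X \<in> borel_measurable M" and Xz: "AE \<omega> in M. X \<omega> = 0"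
      unfolding zero_class_def by auto
    have zm: "(\<lambda>_. 0 :: real^'d^'d) \<in> borel_measurable (H t)" by simp
    have "X \<in> Nset M H S lam t"
      unfolding Nset_def using Xm Xz
      by (intro CollectI conjI bexI[OF _ zm]) (auto simp: Fmap_def fmap_zero)
    moreover have "(\<lambda>\<omega>. - X \<omega>) \<in> Nset M H S lam t"
      unfolding Nset_def using Xm Xz
      by (intro CollectI conjI bexI[OF _ zm]) (auto simp: Fmap_def fmap_zero)
    ultimately show "X \<in> N0set M H S lam t" unfolding N0set_def by simp
  next
    fix X :: "'a \<Rightarrow> real^'d"
    assume "X \<in> N0set M H S lam t"
    then have X1: "X \<in> Nset M H S lam t" and X2: "(\<lambda>\<omega>. - X \<omega>) \<in> Nset M H S lam t"
      unfolding N0set_def by auto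
    from X1 obtain e1 where Xm: "X \<in> borel_measurable M" and e1m: "e1 \<in> borel_measurable (H t)"
      and e1n: "\<forall>\<omega>\<in>space M. \<forall>i j. e1 \<omega> $ i $ j \<ge> 0"
      and e1a: "AE \<omega> in M. X \<omega> = Fmap S lam t \<omega> (e1 \<omega>)"
      unfolding Nset_def by auto
    from X2 obtain e2 where e2m: "e2 \<in> borel_measurable (H t)"
      and e2n: "\<forall>\<omega>\<in>space M. \<forall>i j. e2 \<omega> $ i $ j \<ge> 0"
      and e2a: "AE \<omega> in M. - X \<omega> = Fmap S lam t \<omega> (e2 \<omega>)"
      unfolding Nset_def by auto
    define B where "B = {\<omega> \<in> space (H t). e1 \<omega> + e2 \<omega> \<noteq> 0}"
    have BH: "B \<in> sets (H t)" unfolding B_def using e1m e2m by measurable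
    then have BM: "B \<in> sets M" using ssub by blast
    have pt: "e1 \<omega> + e2 \<omega> = 0"
      if "\<omega> \<in> space M" "X \<omega> = Fmap S lam t \<omega> (e1 \<omega>)" "- X \<omega> = Fmap S lam t \<omega> (e2 \<omega>)"
         "\<forall>i j k. 1 + lam t \<omega> $ i $ j \<le> (1 + lam t \<omega> $ i $ k) * (1 + lam t \<omega> $ k $ j) \<and>
             lam t \<omega> $ i $ j + lam t \<omega> $ j $ i > 0" for \<omega>
    proof (rule key)
      show "\<forall>i. S t \<omega> $ i > 0" using S_pos tT that(1) by blast
      show "\<forall>i j. lam t \<omega> $ i $ j \<ge> 0" using lam_nonneg tT that(1) by blast
      show "\<forall>i j. (e1 \<omega> + e2 \<omega>) $ i $ j \<ge> 0" using e1n e2n that(1) by simp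
      show "\<forall>i j k. 1 + lam t \<omega> $ i $ j \<le> (1 + lam t \<omega> $ i $ k) * (1 + lam t \<omega> $ k $ j) \<and>
             lam t \<omega> $ i $ j + lam t \<omega> $ j $ i > 0" by (rule that(4))
      have "fmap (tau (S t \<omega>)) (lam t \<omega>) (e1 \<omega> + e2 \<omega>) = Fmap S lam t \<omega> (e1 \<omega>) + Fmap S lam t \<omega> (e2 \<omega>)"
        unfolding Fmap_def using e1n e2n that(1) by (simp add: fmap_add)
      also have "\<dots> = 0" using that(2,3) by (metis neg_eq_iff_add_eq_0)
      finally show "fmap (tau (S t \<omega>)) (lam t \<omega>) (e1 \<omega> + e2 \<omega>) = 0" .
    qed
    have "measure M B = 0"
    proof (rule ccontr)
      assume "measure M B \<noteq> 0"
      then have "measure M B > 0" using measure_nonneg[of M B] by linarith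
      then have "\<exists>B'\<in>sets M. B' \<subseteq> B \<and> measure M B' > 0 \<and>
          (\<forall>\<omega>\<in>B'. \<forall>i j k.
             1 + lam t \<omega> $ i $ j \<le> (1 + lam t \<omega> $ i $ k) * (1 + lam t \<omega> $ k $ j) \<and>
             lam t \<omega> $ i $ j + lam t \<omega> $ j $ i > 0)" using hyp BH by simp
      then obtain B' where B'M: "B' \<in> sets M" and B'B: "B' \<subseteq> B" and B'p: "measure M B' > 0"
        and B'c: "\<forall>\<omega>\<in>B'. \<forall>i j k.
             1 + lam t \<omega> $ i $ j \<le> (1 + lam t \<omega> $ i $ k) * (1 + lam t \<omega> $ k $ j) \<and>
             lam t \<omega> $ i $ j + lam t \<omega> $ j $ i > 0"
        by (elim bexE conjE)
      have "AE \<omega> in M. X \<omega> = Fmap S lam t \<omega> (e1 \<omega>) \<and> - X \<omega> = Fmap S lam t \<omega> (e2 \<omega>)"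
        using e1a e2a by eventually_elim simp
      note AEc = this
      obtain N where Nsub: "{\<omega> \<in> space M. \<not> (X \<omega> = Fmap S lam t \<omega> (e1 \<omega>) \<and> - X \<omega> = Fmap S lam t \<omega> (e2 \<omega>))} \<subseteq> N"
        and Ne: "emeasure M N = 0" and Ns: "N \<in> sets M"
        using AEc by (rule AE_E)
      have N1: "N \<in> null_sets M" using Ne Ns by (simp add: null_sets_def)
      have "\<not> B' \<subseteq> N"
      proof
        assume "B' \<subseteq> N"
        then have "measure M B' \<le> measure M N" using N1 B'M
          by (intro P.finite_measure_mono) auto
        moreover have "measure M N = 0" using null_setsD1[OF N1] by (simp add: measure_def)
        ultimately show False using B'p by simp
      qed
      then obtain \<omega> where w: "\<omega> \<in> B'" "\<omega> \<notin> N" by blast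
      have ws: "\<omega> \<in> space M" using w(1) B'M sets.sets_into_space by blast
      have "e1 \<omega> + e2 \<omega> = 0"
        using pt[OF ws] Nsub w ws B'c by blast
      moreover have "\<omega> \<in> B" using w B'B by blast
      ultimately show False unfolding B_def by simp
    qed
    then have "B \<in> null_sets M" using BM by (intro null_setsI) (simp_all add: P.emeasure_eq_measure)
    then have "AE \<omega> in M. \<omega> \<notin> B" by (rule AE_not_in)
    then have "AE \<omega> in M. X \<omega> = 0"
      using e1a AE_space
    proof eventually_elim
      case (elim \<omega>)
      then have ws: "\<omega> \<in> space M" by simp
      have "e1 \<omega> + e2 \<omega> = 0" using elim ws spc unfolding B_def by auto
      then have "e1 \<omega> = 0" using e1n e2n ws
        by (simp add: vec_eq_iff) (metis add_nonneg_eq_0_iff)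
      then show ?case using elim by (simp add: Fmap_def fmap_zero)
    qed
    then show "X \<in> zero_class M" unfolding zero_class_def using Xm by simp
  qed
qed

end
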